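(* Let $\{\mathcal{T}_t\}_{t\ge0}$ be a quasi-free hybrid dynamical semigroup with $\mathcal{T}_t[W(\xi)]=f_t(\xi)W(S_t\xi)$. Then: (1) there is a real $d\times d$ matrix $Z$ with $S_t=\exp(Zt)$ for all $t\ge0$; (2) $f_t(0)=1$ for all $t\ge0$ and $f_0(\xi)=1$ for all $\xi\in\Xi$; (3) $f_{t+s}(\xi)=f_s(S_t\xi)\,f_t(\xi)$ for all $t,s\ge0$ and all $\xi\in\Xi$.
   Context: $\mathcal{H}=L^2(\mathbb{R}^n)$ with position and momentum operators $Q_j,P_j$. $\mathcal{N}=\mathcal{B}(\mathcal{H})\otimes L^\infty(\mathbb{R}^s)$, whose elements are identified with (bounded measurable) functions $x\mapsto F(x)\in\mathcal{B}(\mathcal{H})$ on $\mathbb{R}^s$; $\mathbb{1}$ denotes the identity. $d=2n+s$, $\Xi=\mathbb{R}^{2n}\oplus\mathbb{R}^s=\mathbb{R}^d$; write $\xi=(\zeta,k)$, $\zeta=(u,v)\in\mathbb{R}^{2n}$, $k\in\mathbb{R}^s$. Hybrid Weyl operators: $W(\xi)(x)=W_1(\zeta)e^{ix^{T}k}$ with $W_1(u,v)=\exp\{i(u^{T}Q+v^{T}P)\}$. $\sigma$ is the real $d\times d$ matrix with $\sigma_{i,i+n}=1$, $\sigma_{i+n,i}=-1$ ($1\le i\le n$), other entries $0$; $W(\xi+\eta)=W(\xi)W(\eta)\exp\{\tfrac i2\xi^{T}\sigma\eta\}$. A quasi-free hybrid dynamical semigroup is a family $\{\mathcal{T}_t,t\ge0\}$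 of linear operators, defined at least on the linear span of the Weyl operators (with values in $\mathcal{N}$), such that for all $t,s\ge0$: (a) $\mathcal{T}_t[\mathbb{1}]=\mathbb{1}$; (b) $\mathcal{T}_0$ is the identity; (c) $\mathcal{T}_t\circ\mathcal{T}_s=\mathcal{T}_{t+s}$; (d) for every integer $N$, $\phi_k\in\mathcal{H}$, $\xi^k\in\Xi$, $\sum_{k,l=1}^N\langle\phi_k|\mathcal{T}_t[W(\xi^k)^\dagger W(\xi^l)]|\phi_l\rangle\ge0$; (e) $\mathcal{T}_t[W(\xi)]=f_t(\xi)W(S_t\xi)$ for all $\xi$, with $S_t$ a real linear map $\Xi\to\Xi$ and $f_t:\Xi\to\mathbb{C}$ continuous; (f) $t\mapsto f_t(\xi)$ and $t\mapsto S_t$ are continuous. *)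

theory Defs
  imports "HOL-Analysis.Analysis"
begin

text \<open>Phase space Xi = R^{2n} (+) R^s = R^d, realised as real vectors indexed by
  the finite type (('n + 'n) + 's): index Inl (Inl i) is u_i, Inl (Inr i) is v_i,
  Inr j is k_j.\<close>

type_synonym ('n,'s) xi = "real ^ (('n + 'n) + 's)"
type_synonym ('n,'s) mat = "real ^ (('n + 'n) + 's) ^ (('n + 'n) + 's)"

definition xi_u :: "('n::finite,'s::finite) xi \<Rightarrow> real ^ 'n" where
  "xi_u \<xi> = (\<chi> i. \<xi> $ Inl (Inl i))"
definition xi_v :: "('n::finite,'s::finite) xi \<Rightarrow> real ^ 'n" where
  "xi_v \<xi> = (\<chi> i. \<xi> $ Inl (Inr i))"
definition xi_k :: "('n::finite,'s::finite) xi \<Rightarrow> real ^ 's" where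
  "xi_k \<xi> = (\<chi> j. \<xi> $ Inr j)"

text \<open>Operators on wave functions psi : R^n -> C, and elements of
  N = B(H) (x) L^infty(R^s) as functions x |-> operator.\<close>

type_synonym 'n hop = "(real ^ 'n \<Rightarrow> complex) \<Rightarrow> (real ^ 'n \<Rightarrow> complex)"
type_synonym ('n,'s) nel = "real ^ 's \<Rightarrow> 'n hop"

text \<open>Weyl operator W_1(u,v) = exp(i(u.Q + v.P)) with P = -i d/dq, written out:
  (W_1(u,v) psi)(q) = exp(i u.v/2) exp(i u.q) psi(q+v).\<close>
definition weyl1 :: "real ^ 'n \<Rightarrow> real ^ 'n \<Rightarrow> 'n::finite hop" where
  "weyl1 u v = (\<lambda>\<psi> q. exp (\<i> * complex_of_real (inner u v / 2))
                     * exp (\<i> * complex_of_real (inner u q)) * \<psi> (q + v))"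

definition hweyl :: "('n::finite,'s::finite) xi \<Rightarrow> ('n,'s) nel" where
  "hweyl \<xi> = (\<lambda>x \<psi> q. exp (\<i> * complex_of_real (inner x (xi_k \<xi>)))
                          * weyl1 (xi_u \<xi>) (xi_v \<xi>) \<psi> q)"

definition nunit :: "('n::finite,'s::finite) nel" where
  "nunit = (\<lambda>x \<psi>. \<psi>)"

definition nlin :: "complex \<Rightarrow> ('n::finite,'s::finite) nel \<Rightarrow> complex \<Rightarrow> ('n,'s) nel \<Rightarrow> ('n,'s) nel" where
  "nlin a A b B = (\<lambda>x \<psi> q. a * A x \<psi> q + b * B x \<psi> q)"

definition nmult :: "('n::finite,'s::finite) nel \<Rightarrow> ('n,'s) nel \<Rightarrow> ('n,'s) nel" where
  "nmult A B = (\<lambda>x \<psi>. A x (B x \<psi>))"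

text \<open>Adjoint of a hybrid Weyl operator (Weyl operators are unitary, W(xi)^dagger = W(-xi)).\<close>
definition hweyl_adj :: "('n::finite,'s::finite) xi \<Rightarrow> ('n,'s) nel" where
  "hweyl_adj \<xi> = hweyl (- \<xi>)"

definition weyl_span :: "('n::finite,'s::finite) nel set" where
  "weyl_span = {(\<lambda>x \<psi> q. \<Sum>j<m. c j * hweyl (\<xi> j) x \<psi> q) | (m::nat) (c::nat \<Rightarrow> complex) (\<xi>::nat \<Rightarrow> ('n,'s) xi). True}"

definition sq_integrable :: "(real ^ 'n::finite \<Rightarrow> complex) \<Rightarrow> bool" where
  "sq_integrable \<phi> \<longleftrightarrow> \<phi> \<in> borel_measurable lborel \<and> integrable lborel (\<lambda>q. (cmod (\<phi> q))\<^sup>2)"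

definition mel :: "(real ^ 'n::finite \<Rightarrow> complex) \<Rightarrow> 'n hop \<Rightarrow> (real ^ 'n \<Rightarrow> complex) \<Rightarrow> complex" where
  "mel \<phi> A \<psi> = (LINT q|lborel. cnj (\<phi> q) * A \<psi> q)"

primrec matpow :: "real ^ 'd ^ 'd \<Rightarrow> nat \<Rightarrow> real ^ 'd ^ 'd::finite" where
  "matpow A 0 = mat 1"
| "matpow A (Suc k) = A ** matpow A k"

definition mat_exp :: "real ^ 'd ^ 'd \<Rightarrow> real ^ 'd ^ 'd::finite" where
  "mat_exp A = (\<Sum>k. (1 / fact k) *\<^sub>R matpow A k)"

definition qf_hybrid_dyn_semigroup ::
  "(real \<Rightarrow> ('n::finite,'s::finite) nel \<Rightarrow> ('n,'s) nel) \<Rightarrow> (real \<Rightarrow> ('n,'s) xi \<Rightarrow> complex)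
   \<Rightarrow> (real \<Rightarrow> ('n,'s) mat) \<Rightarrow> bool" where
  "qf_hybrid_dyn_semigroup T f S \<longleftrightarrow>
     \<comment> \<open>linearity on the span of the Weyl operators\<close>
     (\<forall>t\<ge>0. \<forall>A\<in>weyl_span. \<forall>B\<in>weyl_span. \<forall>a b.
        T t (nlin a A b B) = nlin a (T t A) b (T t B)) \<and>
     \<comment> \<open>(a)\<close>
     (\<forall>t\<ge>0. T t nunit = nunit) \<and>
     \<comment> \<open>(b)\<close>
     (\<forall>A\<in>weyl_span. T 0 A = A) \<and>
     \<comment> \<open>(c)\<close>
     (\<forall>t\<ge>0. \<forall>s\<ge>0. \<forall>A\<in>weyl_span. T t (T s A) = T (t + s) A) \<and>
     \<comment> \<open>(d)\<close>
     (\<forall>t\<ge>0. \<forall>(N::nat) (\<phi>::nat \<Rightarrow> real ^ 'n \<Rightarrow> complex) (\<xi>::nat \<Rightarrow> ('n,'s) xi).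
        (\<forall>k. sq_integrable (\<phi> k)) \<longrightarrow>
        (AE x in lborel.
           (let z = (\<Sum>k\<in>{1..N}. \<Sum>l\<in>{1..N}.
                      mel (\<phi> k) (T t (nmult (hweyl_adj (\<xi> k)) (hweyl (\<xi> l))) x) (\<phi> l))
            in Im z = 0 \<and> Re z \<ge> 0))) \<and>
     \<comment> \<open>(e)\<close>
     (\<forall>t\<ge>0. \<forall>\<xi>. T t (hweyl \<xi>) = (\<lambda>x \<psi> q. f t \<xi> * hweyl (S t *v \<xi>) x \<psi> q)) \<and>
     (\<forall>t\<ge>0. continuous_on UNIV (f t)) \<and>
     \<comment> \<open>(f)\<close>
     (\<forall>\<xi>. continuous_on {0..} (\<lambda>t. f t \<xi>)) \<and>
     continuous_on {0..} S"

end

theory Submission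
  imports Defs
begin

typedef (overloaded) ('d::finite) sqm = "UNIV :: (real^'d^'d) set" morphisms mrep mabs by auto
setup_lifting type_definition_sqm

lemma onorm_mv_eq0: "onorm ((*v) (A::real^'d::finite^'d)) = 0 \<longleftrightarrow> A = 0"
  by (simp add: onorm_eq_0 matrix_eq)
lemma onorm_mv_add: "onorm ((*v) ((A::real^'d::finite^'d) + B)) \<le> onorm ((*v) A) + onorm ((*v) B)"
proof -
  have "(*v) (A+B) = (\<lambda>x. A *v x + B *v x)" by (rule ext) (simp add: matrix_vector_mult_add_rdistrib)
  then show ?thesis
  using onorm_triangle[OF matrix_vector_mul_bounded_linear matrix_vector_mul_bounded_linear, of A B]
  by simp
qed
lemma onorm_mv_scale: "onorm ((*v) (c *\<^sub>R (A::real^'d::finite^'d))) = \<bar>c\<bar> * onorm ((*v) A)"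
proof -
  have "(*v) (c *\<^sub>R A) = (\<lambda>x. c *\<^sub>R (A *v x))" by (rule ext) (simp add: scaleR_matrix_vector_assoc)
  then show ?thesis
  using onorm_scaleR[OF matrix_vector_mul_bounded_linear, of c A]
  by simp
qed

instantiation sqm :: (finite) real_normed_vector
begin
lift_definition zero_sqm :: "'a sqm" is 0 .
lift_definition plus_sqm :: "'a sqm \<Rightarrow> 'a sqm \<Rightarrow> 'a sqm" is "(+)" .
lift_definition minus_sqm :: "'a sqm \<Rightarrow> 'a sqm \<Rightarrow> 'a sqm" is "(-)" .
lift_definition uminus_sqm :: "'a sqm \<Rightarrow> 'a sqm" is "uminus" .
lift_definition scaleR_sqm :: "real \<Rightarrow> 'a sqm \<Rightarrow> 'a sqm" is "scaleR" .
lift_definition norm_sqm :: "'a sqm \<Rightarrow> real" is "\<lambda>A. onorm ((*v) A)" .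
definition sgn_sqm :: "'a::finite sqm \<Rightarrow> 'a sqm" where "sgn_sqm x = scaleR (inverse (norm x)) x"
definition dist_sqm :: "'a::finite sqm \<Rightarrow> 'a sqm \<Rightarrow> real" where "dist_sqm x y = norm (x - y)"
definition uniformity_sqm :: "('a::finite sqm \<times> 'a sqm) filter" where
  "uniformity_sqm = (INF e\<in>{0<..}. principal {(x, y). dist x y < e})"
definition open_sqm :: "'a::finite sqm set \<Rightarrow> bool" where
  "open_sqm U = (\<forall>x\<in>U. \<forall>\<^sub>F (x', y) in uniformity. x' = x \<longrightarrow> y \<in> U)"
instance
  apply standard
  unfolding dist_sqm_def open_sqm_def sgn_sqm_def uniformity_sqm_def
  apply (simp_all add: mrep_inject[symmetric] zero_sqm.rep_eq plus_sqm.rep_eq minus_sqm.rep_eq uminus_sqm.rep_eq scaleR_sqm.rep_eq norm_sqm.rep_eq algebra_simps onorm_mv_eq0 onorm_mv_add onorm_mv_scale)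
  done
end

lemma mm_scale_left: "(c *\<^sub>R (A::real^'d::finite^'d)) ** B = c *\<^sub>R (A ** B)"
  by (simp add: matrix_eq matrix_vector_mul_assoc[symmetric] scaleR_matrix_vector_assoc[symmetric])
lemma mm_scale_right: "(A::real^'d::finite^'d) ** (c *\<^sub>R B) = c *\<^sub>R (A ** B)"
  by (simp add: matrix_eq matrix_vector_mul_assoc[symmetric] scaleR_matrix_vector_assoc[symmetric] matrix_vector_mult_scaleR)
lemma mat1_nz: "mat 1 \<noteq> (0::real^'d::finite^'d)"
proof
  fix i :: 'd
  assume "mat 1 = (0::real^'d::finite^'d)"
  then have "(mat 1 :: real^'d^'d) $ i $ i = 0" by simp
  then show False by (simp add: mat_def)
qed
lemma mm_add_rdistrib: "((A::real^'d::finite^'d) + B) ** C = A ** C + B ** C"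
  by (simp add: matrix_eq matrix_vector_mul_assoc[symmetric] matrix_vector_mult_add_rdistrib)
lemma onorm_mv_mult: "onorm ((*v) ((A::real^'d::finite^'d) ** B)) \<le> onorm ((*v) A) * onorm ((*v) B)"
proof -
  have "(*v) (A ** B) = (*v) A o (*v) B" by (rule ext) (simp add: matrix_vector_mul_assoc)
  then show ?thesis using onorm_compose[OF matrix_vector_mul_bounded_linear matrix_vector_mul_bounded_linear, of A B]
    by simp
qed
lemma onorm_mv_one: "onorm ((*v) (mat 1 :: real^'d::finite^'d)) = 1"
proof -
  have "(*v) (mat 1 :: real^'d::finite^'d) = (\<lambda>x. x)" by (rule ext) simp
  then show ?thesis using onorm_id by simp
qed

instantiation sqm :: (finite) real_normed_algebra_1
begin
lift_definition one_sqm :: "'a sqm" is "mat 1" .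
lift_definition times_sqm :: "'a sqm \<Rightarrow> 'a sqm \<Rightarrow> 'a sqm" is "(**)" .
instance
  apply standard
  apply (simp_all add: mrep_inject[symmetric] zero_sqm.rep_eq plus_sqm.rep_eq minus_sqm.rep_eq uminus_sqm.rep_eq scaleR_sqm.rep_eq norm_sqm.rep_eq
     one_sqm.rep_eq times_sqm.rep_eq matrix_mul_assoc matrix_add_ldistrib mm_add_rdistrib mm_scale_left mm_scale_right onorm_mv_mult onorm_mv_one mat1_nz)
  done
end

lemma entry_le_onorm: "\<bar>(A::real^'d::finite^'d) $ i $ j\<bar> \<le> onorm ((*v) A)"
proof -
  have "A $ i $ j = (A *v axis j 1) $ i" by (simp add: matrix_vector_mult_basis column_def)
  also have "\<bar>\<dots>\<bar> \<le> norm (A *v axis j 1)" by (rule component_le_norm_cart)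
  also have "\<dots> \<le> onorm ((*v) A) * norm (axis j (1::real))"
    by (rule onorm[OF matrix_vector_mul_bounded_linear])
  finally show ?thesis by simp
qed

lemma frob_le_onorm: "norm (A::real^'d::finite^'d) \<le> real (CARD('d) * CARD('d)) * onorm ((*v) A)"
proof -
  have "norm A \<le> (\<Sum>i\<in>UNIV. norm (A $ i))"
    unfolding norm_vec_def by (rule L2_set_le_sum) simp
  also have "\<dots> \<le> (\<Sum>i\<in>(UNIV::'d set). \<Sum>j\<in>(UNIV::'d set). onorm ((*v) A))"
    apply (rule sum_mono)
    apply (rule norm_le_l1_cart[THEN order_trans])
    apply (rule sum_mono)
    apply (rule entry_le_onorm)
    done
  also have "\<dots> = real (CARD('d) * CARD('d)) * onorm ((*v) A)" by simp
  finally show ?thesis .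
qed

lemma bl_mrep: "bounded_linear (mrep :: 'd::finite sqm \<Rightarrow> real^'d^'d)"
  apply (rule bounded_linear_intro[where K="real (CARD('d) * CARD('d))"])
  apply (simp_all add: plus_sqm.rep_eq scaleR_sqm.rep_eq norm_sqm.rep_eq)
  using frob_le_onorm by (simp add: mult.commute)

lemma bl_mabs: "bounded_linear (mabs :: real^'d^'d \<Rightarrow> 'd::finite sqm)"
  unfolding linear_conv_bounded_linear[symmetric]
  by (rule linearI) (simp_all add: mrep_inject[symmetric] plus_sqm.rep_eq scaleR_sqm.rep_eq mabs_inverse)

instance sqm :: (finite) banach
proof
  fix X :: "nat \<Rightarrow> 'a sqm"
  assume "Cauchy X"
  then have "Cauchy (\<lambda>n. mrep (X n))" by (rule bounded_linear.Cauchy[OF bl_mrep])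
  then obtain L where "(\<lambda>n. mrep (X n)) \<longlonglongrightarrow> L" using Cauchy_convergent convergent_def by blast
  then have "(\<lambda>n. mabs (mrep (X n))) \<longlonglongrightarrow> mabs L" by (rule bounded_linear.tendsto[OF bl_mabs])
  then show "convergent X" by (auto simp add: mrep_inverse convergent_def)
qed

lemma geom_partial:
  fixes r :: "'a::ring_1"
  shows "(1 - r) * (\<Sum>i<n. r^i) = 1 - r^n \<and> (\<Sum>i<n. r^i) * (1 - r) = 1 - r^n"
proof (induction n)
  case 0 then show ?case by simp
next
  case (Suc n)
  have a: "(1 - r) * r^n = r^n - r^Suc n" unfolding power_Suc by (simp add: left_diff_distrib)
  have b: "r^n * (1 - r) = r^n - r^Suc n" unfolding power_Suc2 by (simp add: right_diff_distrib)
  have c: "(1 - r) * (\<Sum>i<Suc n. r^i) = (1 - r) * (\<Sum>i<n. r^i) + (1 - r) * r^n"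
    by (simp only: sum.lessThan_Suc distrib_left)
  have d: "(\<Sum>i<Suc n. r^i) * (1 - r) = (\<Sum>i<n. r^i) * (1 - r) + r^n * (1 - r)"
    by (simp only: sum.lessThan_Suc distrib_right)
  show ?case using Suc.IH a b c d by simp
qed

lemma neumann_inv:
  fixes x :: "'a::{banach,real_normed_algebra_1}"
  assumes "norm (1 - x) < 1"
  shows "\<exists>y. x * y = 1 \<and> y * x = 1"
proof -
  define r where "r = 1 - x"
  have nr: "norm r < 1" using assms r_def by simp
  have sm: "summable (\<lambda>n. r^n)"
    apply (rule summable_comparison_test[where g="\<lambda>n. norm r ^ n"])
    using norm_power_ineq summable_geometric[of "norm r"] nr by auto
  define y where "y = suminf (\<lambda>n. r^n)"
  have ps: "(\<lambda>n. \<Sum>i<n. r^i) \<longlonglongrightarrow> y" using sm y_def summable_LIMSEQ by blast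
  have p0: "(\<lambda>n. r^n) \<longlonglongrightarrow> 0" using nr by (rule LIMSEQ_power_zero)
  have l1: "(\<lambda>n. 1 - r^n) \<longlonglongrightarrow> 1 - 0" by (intro tendsto_intros p0)
  have "(\<lambda>n. (1 - r) * (\<Sum>i<n. r^i)) \<longlonglongrightarrow> (1 - r) * y" by (intro tendsto_intros ps)
  moreover have "(\<lambda>n. (1 - r) * (\<Sum>i<n. r^i)) = (\<lambda>n. 1 - r^n)" using geom_partial[of r] by auto
  ultimately have "(\<lambda>n. 1 - r^n) \<longlonglongrightarrow> (1 - r) * y" by simp
  then have e1: "(1 - r) * y = 1" using l1 LIMSEQ_unique by fastforce
  have "(\<lambda>n. (\<Sum>i<n. r^i) * (1 - r)) \<longlonglongrightarrow> y * (1 - r)" by (intro tendsto_intros ps)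
  moreover have "(\<lambda>n. (\<Sum>i<n. r^i) * (1 - r)) = (\<lambda>n. 1 - r^n)" using geom_partial[of r] by auto
  ultimately have "(\<lambda>n. 1 - r^n) \<longlonglongrightarrow> y * (1 - r)" by simp
  then have e2: "y * (1 - r) = 1" using l1 LIMSEQ_unique by fastforce
  show ?thesis using e1 e2 r_def by auto
qed

lemma deriv_integral_within_ge0:
  fixes U :: "real \<Rightarrow> 'a::banach"
  assumes cont: "continuous_on {0..} U" and x: "x \<ge> 0"
  shows "((\<lambda>u. integral {0..u} U) has_vector_derivative U x) (at x within {0..})"
proof -
  have "continuous_on {0..x+1} U" using cont by (rule continuous_on_subset) auto
  then have d: "((\<lambda>u. integral {0..u} U) has_vector_derivative U x) (at x within {0..x+1})"
    using x by (intro integral_has_vector_derivative) auto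
  have "at x within {0..x+1} = at x within {0..}"
    by (rule at_within_nhd[where S="{..<x+1}"]) auto
  then show ?thesis using d by simp
qed

lemma semigroup_exp:
  fixes U :: "real \<Rightarrow> 'a::{banach,real_normed_algebra_1}"
  assumes cont: "continuous_on {0..} U" and U0: "U 0 = 1"
    and mult: "\<And>t s. t \<ge> 0 \<Longrightarrow> s \<ge> 0 \<Longrightarrow> U (t + s) = U t * U s"
  shows "\<exists>Z. \<forall>t\<ge>0. U t = exp (t *\<^sub>R Z)"
proof -
  have comm: "U t * U s = U s * U t" if "t \<ge> 0" "s \<ge> 0" for t s
    using mult[OF that] mult[OF that(2,1)] by (simp add: add.commute)
  obtain d where d: "d > 0" "\<And>r. r \<in> {0..} \<Longrightarrow> dist r 0 < d \<Longrightarrow> dist (U r) (U 0) < 1/2"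
  proof -
    have "\<forall>x\<in>{0..}. \<forall>e>0. \<exists>d>0. \<forall>x'\<in>{0..}. dist x' x < d \<longrightarrow> dist (U x') (U x) < e"
      using cont by (simp add: continuous_on_iff)
    then have "\<exists>d>0. \<forall>x'\<in>{0..}. dist x' 0 < d \<longrightarrow> dist (U x') (U 0) < 1/2"
      by (meson atLeast_iff half_gt_zero_iff order_refl zero_less_one)
    then show ?thesis using that by blast
  qed
  define h where "h = d / 2"
  have h: "h > 0" using d h_def by simp
  have hb: "norm (U r - 1) \<le> 1/2" if "r \<in> {0..h}" for r
    using d(2)[of r] that h_def d(1) U0 by (auto simp: dist_norm)
  have intU: "U integrable_on {a..b}" if "a \<ge> 0" for a b
    by (rule integrable_continuous_real, rule continuous_on_subset[OF cont]) (use that in auto)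
  define M where "M = integral {0..h} U"
  have hint: "((\<lambda>r. U r - 1) has_integral (M - h *\<^sub>R 1)) {0..h}"
  proof -
    have i1: "(U has_integral M) {0..h}" unfolding M_def by (rule integrable_integral[OF intU]) simp
    have i2: "((\<lambda>r. 1) has_integral h *\<^sub>R (1::'a)) {0..h}"
      using has_integral_const_real[of "1::'a" 0 h] h by simp
    show ?thesis by (rule has_integral_diff[OF i1 i2])
  qed
  have "norm (M - h *\<^sub>R 1) \<le> 1/2 * Henstock_Kurzweil_Integration.content {0..h}"
    using has_integral_bound_real[where S="{}" and B="1/2", OF _ _ hint] hb by simp
  then have "norm (M - h *\<^sub>R 1) \<le> h / 2" using h by simp
  then have "norm ((1/h) *\<^sub>R (M - h *\<^sub>R 1)) \<le> 1/2" using h by (simp add: divide_simps)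
  then have "norm (1 - (1/h) *\<^sub>R M) < 1" using h
    by (simp add: scaleR_diff_right norm_minus_commute)
  then obtain K where K: "((1/h) *\<^sub>R M) * K = 1" "K * ((1/h) *\<^sub>R M) = 1"
    using neumann_inv by blast
  define Mi where "Mi = (1/h) *\<^sub>R K"
  have MMi: "M * Mi = 1" using K(1) by (simp add: Mi_def)
  have MiM: "Mi * M = 1" using K(2) by (simp add: Mi_def)
  define N where "N u = integral {0..u} U" for u
  have shiftint: "U t * M = N (t + h) - N t" if t: "t \<ge> 0" for t
  proof -
    have "((\<lambda>r. U t * U r) has_integral U t * M) {0..h}"
      unfolding M_def using intU[of 0 h] by (intro has_integral_mult_right) auto
    then have "((U \<circ> (+) t) has_integral U t * M) {0..h}"
    proof (rule has_integral_eq[rotated])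
      fix x assume "x \<in> {0..h}"
      then show "U t * U x = (U \<circ> (+) t) x" using mult[OF t, of x] by simp
    qed
    then have "(U has_integral U t * M) {0 + t..h + t}" by (simp add: has_integral_shift_Icc_real)
    then have "integral {t..t+h} U = U t * M" by (simp add: integral_unique add.commute)
    moreover have "N t + integral {t..t+h} U = N (t + h)"
      unfolding N_def using Henstock_Kurzweil_Integration.integral_combine[where a=0 and c=t and b="t+h" and f=U] t h intU[of 0 "t+h"] by simp
    ultimately show ?thesis by (simp add: algebra_simps)
  qed
  define Z where "Z = (U h - 1) * Mi"
  have Uder: "(U has_vector_derivative U t * Z) (at t within {0..})" if t: "t \<ge> 0" for t
  proof -
    have dN1: "(N has_vector_derivative U t) (at t within {0..})"
      unfolding N_def by (rule deriv_integral_within_ge0[OF cont t])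
    have df: "((\<lambda>s. s + h) has_vector_derivative 1) (at t within {0..})"
      by (auto intro!: derivative_eq_intros)
    have "(N has_vector_derivative U (t + h)) (at (t + h) within {0..})"
      unfolding N_def using t h by (intro deriv_integral_within_ge0[OF cont]) simp
    then have dN: "(N has_vector_derivative U (t + h)) (at ((\<lambda>s. s + h) t) within (\<lambda>s. s + h) ` {0..})"
      by (rule has_vector_derivative_within_subset) (use h in auto)
    have "((N \<circ> (\<lambda>s. s + h)) has_vector_derivative 1 *\<^sub>R U (t + h)) (at t within {0..})"
      by (rule vector_diff_chain_within[OF df dN])
    then have dN2: "((\<lambda>s. N (s + h)) has_vector_derivative U (t + h)) (at t within {0..})"
      by (simp add: o_def)
    have dD: "((\<lambda>s. (N (s + h) - N s) * Mi) has_vector_derivative (U (t + h) - U t) * Mi) (at t within {0..})"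
      by (rule has_vector_derivative_mult_left[OF has_vector_derivative_diff[OF dN2 dN1]])
    have eqU: "U s = (N (s + h) - N s) * Mi" if "s \<in> {0..}" for s
    proof -
      have "U s = U s * (M * Mi)" using MMi by simp
      also have "\<dots> = (U s * M) * Mi" by (simp add: mult.assoc)
      finally show ?thesis using shiftint[of s] that by simp
    qed
    have "(U has_vector_derivative (U (t + h) - U t) * Mi) (at t within {0..})"
      by (rule has_vector_derivative_transform[OF _ eqU dD]) (use t in simp_all)
    moreover have "(U (t + h) - U t) * Mi = U t * Z"
      using mult[OF t, of h] h by (simp add: Z_def algebra_simps)
    ultimately show ?thesis by simp
  qed
  define V where "V t = U t * exp (t *\<^sub>R (- Z))" for t
  have Vder: "(V has_vector_derivative 0) (at t within {0..})" if t: "t \<ge> 0" for t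
  proof -
    have "(V has_vector_derivative (U t * ((- Z) * exp (t *\<^sub>R (- Z))) + (U t * Z) * exp (t *\<^sub>R (- Z))))
           (at t within {0..})"
    proof -
      have d1: "(U has_vector_derivative U t * Z) (at t within {0..})" by (rule Uder[OF t])
      have d2: "((\<lambda>t. exp (t *\<^sub>R (- Z))) has_vector_derivative (- Z) * exp (t *\<^sub>R (- Z))) (at t within {0..})"
        by (rule has_vector_derivative_at_within[OF exp_scaleR_has_vector_derivative_left])
      show ?thesis unfolding V_def by (rule has_vector_derivative_mult[OF d1 d2])
    qed
    moreover have "U t * ((- Z) * exp (t *\<^sub>R (- Z))) + (U t * Z) * exp (t *\<^sub>R (- Z)) = 0"
      by (simp add: mult.assoc)
    ultimately show ?thesis by simp
  qed
  obtain c where c: "\<And>t. t \<in> {0..} \<Longrightarrow> V t = c"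
    using has_vector_derivative_zero_constant[of "{0..}" V] Vder by (auto simp: convex_real_interval)
  have V1: "V t = 1" if "t \<ge> 0" for t using c[of t] c[of 0] that U0 by (simp add: V_def)
  show ?thesis
  proof (intro exI allI impI)
    fix t :: real assume t: "t \<ge> 0"
    have "exp (t *\<^sub>R (- Z)) * exp (t *\<^sub>R Z) = exp (t *\<^sub>R (- Z) + t *\<^sub>R Z)"
      by (rule exp_add_commuting[symmetric]) simp
    also have "\<dots> = 1" by simp
    finally have e: "exp (t *\<^sub>R (- Z)) * exp (t *\<^sub>R Z) = 1" .
    have "U t = U t * (exp (t *\<^sub>R (- Z)) * exp (t *\<^sub>R Z))" using e by simp
    also have "\<dots> = V t * exp (t *\<^sub>R Z)" by (simp add: V_def mult.assoc)
    finally show "U t = exp (t *\<^sub>R Z)" using V1[OF t] by simp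
  qed
qed


lemma mrep_power: "mrep (x ^ n) = matpow (mrep x) n"
  by (induction n) (simp_all add: one_sqm.rep_eq times_sqm.rep_eq)

lemma mat_exp_sqm: "mat_exp A = mrep (exp (mabs A))"
proof -
  have "(\<lambda>n. mabs A ^ n /\<^sub>R fact n) sums exp (mabs A)"
    unfolding exp_def by (rule summable_sums[OF summable_exp_generic])
  then have "(\<lambda>n. mrep (mabs A ^ n /\<^sub>R fact n)) sums mrep (exp (mabs A))"
    by (rule bounded_linear.sums[OF bl_mrep])
  moreover have "mrep (mabs A ^ n /\<^sub>R fact n) = (1 / fact n) *\<^sub>R matpow A n" for n
    by (simp add: scaleR_sqm.rep_eq mrep_power mabs_inverse divide_inverse)
  ultimately have "(\<lambda>n. (1 / fact n) *\<^sub>R matpow A n) sums mrep (exp (mabs A))" by simp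
  then show ?thesis unfolding mat_exp_def by (rule sums_unique[symmetric])
qed

lemma matrix_semigroup_exp:
  fixes S :: "real \<Rightarrow> real^'d::finite^'d"
  assumes cont: "continuous_on {0..} S" and S0: "S 0 = mat 1"
    and mult: "\<And>t s. t \<ge> 0 \<Longrightarrow> s \<ge> 0 \<Longrightarrow> S (t + s) = S t ** S s"
  shows "\<exists>Z. \<forall>t\<ge>0. S t = mat_exp (t *\<^sub>R Z)"
proof -
  define U where "U t = mabs (S t)" for t
  have c: "continuous_on {0..} U" unfolding U_def
    by (rule bounded_linear.continuous_on[OF bl_mabs cont])
  have u0: "U 0 = 1" by (simp add: U_def S0 mrep_inject[symmetric] one_sqm.rep_eq mabs_inverse)
  have um: "U (t + s) = U t * U s" if "t \<ge> 0" "s \<ge> 0" for t s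
    using mult[OF that] by (simp add: U_def mrep_inject[symmetric] times_sqm.rep_eq mabs_inverse)
  obtain Z where Z: "\<forall>t\<ge>0. U t = exp (t *\<^sub>R Z)" using semigroup_exp[OF c u0 um] by blast
  show ?thesis
  proof (intro exI allI impI)
    fix t :: real assume t: "t \<ge> 0"
    have "mabs (t *\<^sub>R mrep Z) = t *\<^sub>R Z" by (simp add: mrep_inject[symmetric] scaleR_sqm.rep_eq mabs_inverse)
    then have "mat_exp (t *\<^sub>R mrep Z) = mrep (U t)" using Z t by (simp add: mat_exp_sqm)
    then show "S t = mat_exp (t *\<^sub>R mrep Z)" by (simp add: U_def mabs_inverse)
  qed
qed

lemma exp_i_eq1_zero:
  fixes a :: "real^'m::finite"
  assumes "\<And>y. exp (\<i> * complex_of_real (inner a y)) = 1"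
  shows "a = 0"
proof (rule ccontr)
  assume a: "a \<noteq> 0"
  define y where "y = (pi / inner a a) *\<^sub>R a"
  have "inner a y = pi" using a by (simp add: y_def)
  then have "exp (\<i> * complex_of_real pi) = 1" using assms[of y] by simp
  moreover have "exp (\<i> * complex_of_real pi) = -1" by (simp add: exp_pi_i' mult.commute)
  ultimately show False by simp
qed

definition ephase :: "real \<Rightarrow> complex" where "ephase th = exp (\<i> * complex_of_real th)"

lemma ephase_add: "ephase (a + b) = ephase a * ephase b"
  by (simp add: ephase_def distrib_left exp_add)
lemma ephase_nz: "ephase a \<noteq> 0" by (simp add: ephase_def)
lemma ephase_norm: "cmod (ephase a) = 1" by (simp add: ephase_def)

lemma hweyl_one:
  "hweyl \<xi> x (\<lambda>_. 1) q = ephase (inner x (xi_k \<xi>) + inner (xi_u \<xi>) (xi_v \<xi>) / 2 + inner (xi_u \<xi>) q)"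
  by (simp only: hweyl_def weyl1_def ephase_add mult_1_right) (simp add: ephase_def)

lemma weyl_unique:
  fixes \<xi> \<eta> :: "('n::finite,'s::finite) xi"
  assumes H: "(\<lambda>x \<psi> q. c * hweyl \<xi> x \<psi> q) = (\<lambda>x \<psi> q. c' * hweyl \<eta> x \<psi> q)"
  shows "c = c' \<and> (c \<noteq> 0 \<longrightarrow> \<xi> = \<eta>)"
proof -
  have H': "c * hweyl \<xi> x \<psi> q = c' * hweyl \<eta> x \<psi> q" for x \<psi> q
    using H by meson
  have "cmod (c * hweyl \<xi> 0 (\<lambda>_. 1) 0) = cmod (c' * hweyl \<eta> 0 (\<lambda>_. 1) 0)" using H' by metis
  then have "cmod c = cmod c'" by (simp only: hweyl_one norm_mult ephase_norm mult_1_right)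
  show ?thesis
  proof (cases "c = 0")
    case True
    then have "c' = 0" using \<open>cmod c = cmod c'\<close> by simp
    then show ?thesis using True by simp
  next
    case False
    have v: "xi_v \<eta> = xi_v \<xi>"
    proof (rule ccontr)
      assume ne: "xi_v \<eta> \<noteq> xi_v \<xi>"
      define \<psi>0 where "\<psi>0 = (\<lambda>p::real^'n. if p = 0 then (1::complex) else 0)"
      have "c * hweyl \<xi> 0 \<psi>0 (- xi_v \<xi>) = c' * hweyl \<eta> 0 \<psi>0 (- xi_v \<xi>)" by (rule H')
      moreover have "hweyl \<eta> 0 \<psi>0 (- xi_v \<xi>) = 0" using ne
        by (simp add: hweyl_def weyl1_def \<psi>0_def)
      moreover have "hweyl \<xi> 0 \<psi>0 (- xi_v \<xi>) \<noteq> 0"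
        by (simp add: hweyl_def weyl1_def \<psi>0_def)
      ultimately show False using False by simp
    qed
    define \<alpha> where "\<alpha> = inner (xi_u \<xi>) (xi_v \<xi>) / 2"
    define \<alpha>' where "\<alpha>' = inner (xi_u \<eta>) (xi_v \<eta>) / 2"
    have E: "c * ephase (inner x (xi_k \<xi>) + \<alpha> + inner (xi_u \<xi>) q)
           = c' * ephase (inner x (xi_k \<eta>) + \<alpha>' + inner (xi_u \<eta>) q)" for x q
      using H'[of x "\<lambda>_. 1" q] by (simp add: hweyl_one \<alpha>_def \<alpha>'_def)
    have E0: "c * ephase \<alpha> = c' * ephase \<alpha>'" using E[of 0 0] by simp
    have nz: "c * ephase \<alpha> \<noteq> 0" using False ephase_nz by simp
    have B: "ephase (inner x (xi_k \<xi>) + inner (xi_u \<xi>) q) = ephase (inner x (xi_k \<eta>) + inner (xi_u \<eta>) q)" for x q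
    proof -
      have "(c * ephase \<alpha>) * ephase (inner x (xi_k \<xi>) + inner (xi_u \<xi>) q)
          = (c' * ephase \<alpha>') * ephase (inner x (xi_k \<eta>) + inner (xi_u \<eta>) q)"
        using E[of x q] by (simp add: ephase_add ac_simps)
      then show ?thesis using E0 nz by simp
    qed
    have B2: "ephase ((inner x (xi_k \<xi>) + inner (xi_u \<xi>) q) - (inner x (xi_k \<eta>) + inner (xi_u \<eta>) q)) = 1" for x q
    proof -
      have "ephase ((inner x (xi_k \<xi>) + inner (xi_u \<xi>) q) - (inner x (xi_k \<eta>) + inner (xi_u \<eta>) q))
            * ephase (inner x (xi_k \<eta>) + inner (xi_u \<eta>) q) = ephase (inner x (xi_k \<eta>) + inner (xi_u \<eta>) q)"
        using B[of x q] by (simp flip: ephase_add)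
      then show ?thesis using ephase_nz by simp
    qed
    have k: "xi_k \<xi> - xi_k \<eta> = 0"
      by (rule exp_i_eq1_zero) (use B2[of _ 0] in \<open>simp add: ephase_def inner_diff_left inner_diff_right inner_commute\<close>)
    have u: "xi_u \<xi> - xi_u \<eta> = 0"
      by (rule exp_i_eq1_zero) (use B2[of 0] in \<open>simp add: ephase_def inner_diff_left inner_diff_right\<close>)
    have "\<alpha> = \<alpha>'" using u v by (simp add: \<alpha>_def \<alpha>'_def)
    then have cc: "c = c'" using E0 ephase_nz by simp
    have "\<xi> = \<eta>"
    unfolding vec_eq_iff
    proof (intro allI)
      fix i
      show "\<xi> $ i = \<eta> $ i"
      proof (cases i)
        case (Inl a)
        then show ?thesis
        proof (cases a)
          case (Inl j)
          then show ?thesis using u \<open>i = Inl a\<close> by (simp add: xi_u_def vec_eq_iff)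
        next
          case (Inr j)
          then show ?thesis using v \<open>i = Inl a\<close> by (simp add: xi_v_def vec_eq_iff)
        qed
      next
        case (Inr j)
        then show ?thesis using k by (simp add: xi_k_def vec_eq_iff)
      qed
    qed
    then show ?thesis using cc by simp
  qed
qed
lemma xi_zero: "xi_u (0::('n::finite,'s::finite) xi) = 0" "xi_v (0::('n::finite,'s::finite) xi) = 0"
   "xi_k (0::('n::finite,'s::finite) xi) = 0"
  by (simp_all add: xi_u_def xi_v_def xi_k_def vec_eq_iff)

lemma hweyl_zero: "hweyl (0::('n::finite,'s::finite) xi) = nunit"
  by (simp add: fun_eq_iff hweyl_def weyl1_def nunit_def xi_zero)

lemma hweyl_span: "(\<lambda>x \<psi> q. a * hweyl \<xi> x \<psi> q) \<in> weyl_span"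
  unfolding weyl_span_def
  by (rule CollectI, rule exI[of _ 1], rule exI[of _ "\<lambda>_. a"], rule exI[of _ "\<lambda>_. \<xi>"]) simp

lemma hweyl_span1: "hweyl \<xi> \<in> weyl_span"
  using hweyl_span[of 1 \<xi>] by simp



theorem proposition1:
  fixes T :: "real \<Rightarrow> ('n::finite,'s::finite) nel \<Rightarrow> ('n,'s) nel"
    and f :: "real \<Rightarrow> ('n,'s) xi \<Rightarrow> complex"
    and S :: "real \<Rightarrow> ('n,'s) mat"
  assumes "qf_hybrid_dyn_semigroup T f S"
  shows "(\<exists>Z :: ('n,'s) mat. \<forall>t\<ge>0. S t = mat_exp (t *\<^sub>R Z))
       \<and> (\<forall>t\<ge>0. f t 0 = 1) \<and> (\<forall>\<xi>. f 0 \<xi> = 1)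
       \<and> (\<forall>t\<ge>0. \<forall>s\<ge>0. \<forall>\<xi>. f (t + s) \<xi> = f s (S t *v \<xi>) * f t \<xi>)"
proof -
  note qf = assms[unfolded qf_hybrid_dyn_semigroup_def]
  note q1 = qf[THEN conjunct1]
  note q2 = qf[THEN conjunct2, THEN conjunct1]
  note q3 = qf[THEN conjunct2, THEN conjunct2, THEN conjunct1]
  note q4 = qf[THEN conjunct2, THEN conjunct2, THEN conjunct2, THEN conjunct1]
  note q6 = qf[THEN conjunct2, THEN conjunct2, THEN conjunct2, THEN conjunct2, THEN conjunct2, THEN conjunct1]
  note q7 = qf[THEN conjunct2, THEN conjunct2, THEN conjunct2, THEN conjunct2, THEN conjunct2, THEN conjunct2, THEN conjunct1]
  note q9 = qf[THEN conjunct2, THEN conjunct2, THEN conjunct2, THEN conjunct2, THEN conjunct2, THEN conjunct2, THEN conjunct2, THEN conjunct2]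
  have lin: "\<And>t A B a b. t \<ge> 0 \<Longrightarrow> A \<in> weyl_span \<Longrightarrow> B \<in> weyl_span \<Longrightarrow>
      T t (nlin a A b B) = nlin a (T t A) b (T t B)" using q1 by blast
  have unit: "\<And>t. t \<ge> 0 \<Longrightarrow> T t nunit = nunit" using q2 by blast
  have T0: "\<And>A. A \<in> weyl_span \<Longrightarrow> T 0 A = A" using q3 by blast
  have comp: "\<And>t s A. t \<ge> 0 \<Longrightarrow> s \<ge> 0 \<Longrightarrow> A \<in> weyl_span \<Longrightarrow> T t (T s A) = T (t + s) A"
    using q4 by blast
  have Te: "\<And>t \<xi>. t \<ge> 0 \<Longrightarrow> T t (hweyl \<xi>) = (\<lambda>x \<psi> q. f t \<xi> * hweyl (S t *v \<xi>) x \<psi> q)"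
    using q6 by blast
  have fc: "\<And>t. t \<ge> 0 \<Longrightarrow> continuous_on UNIV (f t)" using q7 by blast
  have Sc: "continuous_on {0..} S" using q9 by blast
  have f_t0: "f t 0 = 1" if t: "t \<ge> 0" for t
  proof -
    have h: "T t nunit = (\<lambda>x \<psi> q. f t 0 * nunit x \<psi> q)" using Te[OF t, of 0] by (simp add: hweyl_zero)
    have E: "(\<lambda>(x::real^'s) (\<psi>::real^'n \<Rightarrow> complex). \<psi>) = (\<lambda>x \<psi> q. f t 0 * \<psi> q)"
      using trans[OF sym[OF unit[OF t]] h] by (simp add: nunit_def)
    have "(\<lambda>_::real^'n. 1::complex) (0::real^'n) = f t 0 * (\<lambda>_::real^'n. 1::complex) (0::real^'n)"
      using arg_cong[OF E, of "\<lambda>F. F (0::real^'s) (\<lambda>_::real^'n. 1::complex) (0::real^'n)"] by simp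
    then show ?thesis by simp
  qed
  have f0S0: "f 0 \<xi> = 1 \<and> S 0 *v \<xi> = \<xi>" for \<xi>
  proof -
    have "(\<lambda>x \<psi> q. 1 * hweyl \<xi> x \<psi> q) = (\<lambda>x \<psi> q. f 0 \<xi> * hweyl (S 0 *v \<xi>) x \<psi> q)"
      using T0[OF hweyl_span1[of \<xi>]] Te[of 0 \<xi>] by simp
    from weyl_unique[OF this] show ?thesis by simp
  qed
  have K3: "f (t + s) \<xi> = f s (S t *v \<xi>) * f t \<xi> \<and>
            (f (t + s) \<xi> \<noteq> 0 \<longrightarrow> S (t + s) *v \<xi> = S s *v (S t *v \<xi>))"
    if t: "t \<ge> 0" and s: "s \<ge> 0" for t s \<xi>
  proof -
    define \<eta> where "\<eta> = S t *v \<xi>"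
    have e1: "T t (hweyl \<xi>) = nlin (f t \<xi>) (hweyl \<eta>) 0 (hweyl \<eta>)"
      using Te[OF t, of \<xi>] by (simp add: nlin_def \<eta>_def)
    have "T s (T t (hweyl \<xi>)) = nlin (f t \<xi>) (T s (hweyl \<eta>)) 0 (T s (hweyl \<eta>))"
      unfolding e1 by (rule lin[OF s hweyl_span1 hweyl_span1])
    also have "\<dots> = (\<lambda>x \<psi> q. (f t \<xi> * f s \<eta>) * hweyl (S s *v \<eta>) x \<psi> q)"
      using Te[OF s, of \<eta>] by (simp add: nlin_def fun_eq_iff)
    finally have a: "T s (T t (hweyl \<xi>)) = (\<lambda>x \<psi> q. (f t \<xi> * f s \<eta>) * hweyl (S s *v \<eta>) x \<psi> q)" .
    have b: "T s (T t (hweyl \<xi>)) = (\<lambda>x \<psi> q. f (t + s) \<xi> * hweyl (S (t + s) *v \<xi>) x \<psi> q)"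
      using comp[OF s t hweyl_span1[of \<xi>]] Te[of "s + t" \<xi>] s t by (simp add: add.commute)
    have "(\<lambda>x \<psi> q. f (t + s) \<xi> * hweyl (S (t + s) *v \<xi>) x \<psi> q)
        = (\<lambda>x \<psi> q. (f t \<xi> * f s \<eta>) * hweyl (S s *v \<eta>) x \<psi> q)" using a b by simp
    from weyl_unique[OF this] show ?thesis by (simp add: \<eta>_def mult.commute)
  qed
  have Smult: "S (t + s) = S s ** S t" if t: "t \<ge> 0" and s: "s \<ge> 0" for t s
  proof -
    have r: "t + s \<ge> 0" using t s by simp
    have "\<forall>x\<in>UNIV. \<forall>e>0. \<exists>d>0. \<forall>x'\<in>UNIV. dist x' x < d \<longrightarrow> dist (f (t + s) x') (f (t + s) x) < e"
      using fc[OF r] by (simp add: continuous_on_iff)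
    then obtain e where e: "e > 0" "\<And>x'. dist x' 0 < e \<Longrightarrow> dist (f (t + s) x') (f (t + s) 0) < 1"
      by (meson UNIV_I zero_less_one)
    have nz: "f (t + s) x' \<noteq> 0" if "norm x' < e" for x'
      using e(2)[of x'] that f_t0[OF r] by (auto simp: dist_norm)
    have "S (t + s) *v \<xi> = (S s ** S t) *v \<xi>" for \<xi>
    proof (cases "\<xi> = 0")
      case True then show ?thesis by simp
    next
      case False
      define a where "a = e / (2 * norm \<xi>)"
      have a: "a > 0" using e False by (simp add: a_def)
      have "norm (a *\<^sub>R \<xi>) = e / 2" using False e by (simp add: a_def)
      then have "norm (a *\<^sub>R \<xi>) < e" using e by simp
      then have "S (t + s) *v (a *\<^sub>R \<xi>) = S s *v (S t *v (a *\<^sub>R \<xi>))"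
        using K3[OF t s, of "a *\<^sub>R \<xi>"] nz by blast
      then have "a *\<^sub>R (S (t + s) *v \<xi>) = a *\<^sub>R ((S s ** S t) *v \<xi>)"
        by (simp add: matrix_vector_mult_scaleR matrix_vector_mul_assoc)
      then show ?thesis using a by simp
    qed
    then show ?thesis by (simp add: matrix_eq)
  qed
  have S0: "S 0 = mat 1" using f0S0 by (simp add: matrix_eq)
  have "\<exists>Z :: ('n,'s) mat. \<forall>t\<ge>0. S t = mat_exp (t *\<^sub>R Z)"
  proof (rule matrix_semigroup_exp[OF Sc S0])
    fix t s :: real assume ts: "t \<ge> 0" "s \<ge> 0"
    have "S (t + s) = S (s + t)" by (simp only: add.commute)
    also have "\<dots> = S t ** S s" by (rule Smult[OF ts(2) ts(1)])
    finally show "S (t + s) = S t ** S s" .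
  qed
  moreover have "\<forall>t\<ge>0. \<forall>s\<ge>0. \<forall>\<xi>. f (t + s) \<xi> = f s (S t *v \<xi>) * f t \<xi>"
    using K3 by blast
  moreover have "\<forall>t\<ge>0. f t 0 = 1" using f_t0 by blast
  moreover have "\<forall>\<xi>. f 0 \<xi> = 1" using f0S0 by blast
  ultimately show ?thesis by blast
qed

end
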